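(* Let $m_1,m_3,m_4\in\mathbb{R}$ and let $\mathfrak g$ be the real linear span of $E_1=\begin{pmatrix} -2m_1&m_3-im_4&im_1^2&1\\0&0&0&0\\4i&0&2m_1&0\\0&0&0&0\end{pmatrix}$, $E_2=\begin{pmatrix}0&0&0&i\\0&0&0&0\\0&0&0&0\\0&0&0&0\end{pmatrix}$, $E_3=\begin{pmatrix}\frac32 m_3&-m_1&\frac{i}{4}m_1m_3&0\\0&m_3&0&1\\0&2i&2m_3&0\\0&0&0&0\end{pmatrix}$, $E_4=\begin{pmatrix}\frac32 m_4&im_1&\frac{i}{4}m_1m_4&0\\0&m_4&0&i\\0&2&2m_4&0\\0&0&0&0\end{pmatrix}$, $E_5=\begin{pmatrix}0&0&0&0\\0&0&0&0\\0&0&0&1\\0&0&0&0\end{pmatrix}$. Then every integral variety of type $(1/2,0)$ related to $\mathfrak g$ is affinely equivalent to (an open piece of) one of the hypersurfaces 1) $v=2x_1^2+|z_2|^2$; 2) $v=\dfrac{x_1^2}{1-x_2}+2|z_2|^2$.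
   Context: Coordinates in $\mathbb{C}^3$ are $z_1=x_1+iy_1$, $z_2=x_2+iy_2$, $w=u+iv$, $z=(z_1,z_2)$. To a complex $4\times4$ matrix $\begin{pmatrix}a_1&a_2&a_3&p\\ b_1&b_2&b_3&s\\ c_1&c_2&c_3&q\\0&0&0&0\end{pmatrix}$ one associates the holomorphic affine vector field $Z=(a_1z_1+a_2z_2+a_3w+p)\frac{\partial}{\partial z_1}+(b_1z_1+b_2z_2+b_3w+s)\frac{\partial}{\partial z_2}+(c_1z_1+c_2z_2+c_3w+q)\frac{\partial}{\partial w}$. For a real linear span $\mathfrak g$ of such matrices, an integral variety of type $(1/2,0)$ related to $\mathfrak g$ is a real-analytic strictly pseudoconvex real hypersurface $M$ defined near $0\in\mathbb{C}^3$, with $0\in M$, given near $0$ by an equation $v=|z_1|^2+|z_2|^2+\frac12(z_1^2+\bar z_1^2)+\sum_{k+l+2m\ge 3}F_{klm}(z,\bar z)u^m$ (with $F_{klm}$ a polynomial of degree $k$ in $z$ and $l$ in $\bar z$, the right-hand side real), such that for every $Z\in\mathfrak g$ the real vector field $Z+\bar Z$ is tangent to $M$, i.e. $\mathrm{Re}(Z(\Phi))|_M=0$ for a defining function $\Phi$ of $M$. Two hypersurfaces are affinely equivalent if a complex affine transformation of $\mathbb{C}^3$ maps a neighbourhood in one onto an open piece of the other. *)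

theory Defs
  imports "HOL-Analysis.Analysis"
begin

text \<open>Points of C^3 are vectors p :: complex^3 with p$1 = z1, p$2 = z2, p$3 = w.
  Complex 4x4 matrices are elements of complex^4^4.\<close>

definition hom_coords :: "complex^3 \<Rightarrow> complex^4" where
  "hom_coords p = vector [p$1, p$2, p$3, 1]"

definition affine_vf :: "complex^4^4 \<Rightarrow> complex^3 \<Rightarrow> complex^3" where
  "affine_vf A p = vector [(A *v hom_coords p)$1, (A *v hom_coords p)$2, (A *v hom_coords p)$3]"

definition mat4 :: "complex list list \<Rightarrow> complex^4^4" where
  "mat4 rs = vector (map vector rs)"

definition E1 :: "real \<Rightarrow> real \<Rightarrow> real \<Rightarrow> complex^4^4" where
  "E1 m1 m3 m4 = mat4
     [[-2* of_real m1, of_real m3 - \<i> * of_real m4, \<i> * (of_real m1)^2, 1],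
      [0, 0, 0, 0],
      [4* \<i>, 0, 2* of_real m1, 0],
      [0, 0, 0, 0]]"

definition E2 :: "complex^4^4" where
  "E2 = mat4 [[0,0,0,\<i>],[0,0,0,0],[0,0,0,0],[0,0,0,0]]"

definition E3 :: "real \<Rightarrow> real \<Rightarrow> complex^4^4" where
  "E3 m1 m3 = mat4
     [[3/2* of_real m3, -of_real m1, \<i> / 4* of_real m1* of_real m3, 0],
      [0, of_real m3, 0, 1],
      [0, 2* \<i>, 2* of_real m3, 0],
      [0, 0, 0, 0]]"

definition E4 :: "real \<Rightarrow> real \<Rightarrow> complex^4^4" where
  "E4 m1 m4 = mat4
     [[3/2* of_real m4, \<i> * of_real m1, \<i> / 4* of_real m1* of_real m4, 0],
      [0, of_real m4, 0, \<i>],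
      [0, 2, 2* of_real m4, 0],
      [0, 0, 0, 0]]"

definition E5 :: "complex^4^4" where
  "E5 = mat4 [[0,0,0,0],[0,0,0,0],[0,0,0,1],[0,0,0,0]]"

definition lie_g :: "real \<Rightarrow> real \<Rightarrow> real \<Rightarrow> (complex^4^4) set" where
  "lie_g m1 m3 m4 = span {E1 m1 m3 m4, E2, E3 m1 m3, E4 m1 m4, E5}"

definition wdeg :: "nat \<times> nat \<times> nat \<times> nat \<times> nat \<Rightarrow> nat" where
  "wdeg \<alpha> = (case \<alpha> of (a,b,c,d,e) \<Rightarrow> a + b + c + d + 2*e)"

definition monomial5 :: "nat \<times> nat \<times> nat \<times> nat \<times> nat \<Rightarrow> complex \<Rightarrow> complex \<Rightarrow> real \<Rightarrow> real" where
  "monomial5 \<alpha> z1 z2 u = (case \<alpha> of (a,b,c,d,e) \<Rightarrow>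
      Re z1 ^ a * Im z1 ^ b * Re z2 ^ c * Im z2 ^ d * u ^ e)"

definition Q_norm :: "complex \<Rightarrow> complex \<Rightarrow> real" where
  "Q_norm z1 z2 = (cmod z1)^2 + (cmod z2)^2 + Re ((z1^2 + (cnj z1)^2) / 2)"

definition normal_form_fn :: "(complex \<Rightarrow> complex \<Rightarrow> real \<Rightarrow> real) \<Rightarrow> real \<Rightarrow> bool" where
  "normal_form_fn F r \<longleftrightarrow> r > 0 \<and>
     (\<exists>c :: nat \<times> nat \<times> nat \<times> nat \<times> nat \<Rightarrow> real.
        (\<forall>\<alpha>. wdeg \<alpha> \<le> 2 \<longrightarrow> c \<alpha> = 0) \<and>
        (\<forall>z1 z2 u. \<bar>Re z1\<bar> < r \<and> \<bar>Im z1\<bar> < r \<and> \<bar>Re z2\<bar> < r \<and> \<bar>Im z2\<bar> < r \<and> \<bar>u\<bar> < r \<longrightarrow>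
           ((\<lambda>\<alpha>. c \<alpha> * monomial5 \<alpha> z1 z2 u) has_sum (F z1 z2 u - Q_norm z1 z2)) UNIV))"

definition in_box :: "real \<Rightarrow> complex^3 \<Rightarrow> bool" where
  "in_box r p \<longleftrightarrow> \<bar>Re (p$1)\<bar> < r \<and> \<bar>Im (p$1)\<bar> < r \<and> \<bar>Re (p$2)\<bar> < r \<and> \<bar>Im (p$2)\<bar> < r
                   \<and> \<bar>Re (p$3)\<bar> < r"

text \<open>Integral variety of type (1/2,0) related to g: near 0 (i.e. inside the open set U
  containing 0), M is {v = F(z1,z2,u)} with F as above, and for every Z in g the real
  vector field Z + conj Z (whose value at p, viewed in C^3 = R^6, is Z(p)) is tangent to M,
  i.e. the differential of the defining function Phi = v - F kills it along M.\<close>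
definition integral_variety :: "real \<Rightarrow> real \<Rightarrow> real \<Rightarrow> (complex^3) set \<Rightarrow> bool" where
  "integral_variety m1 m3 m4 M \<longleftrightarrow>
     (\<exists>F r U. normal_form_fn F r \<and> open U \<and> 0 \<in> U \<and> (\<forall>p\<in>U. in_box r p) \<and>
        M \<inter> U = {p \<in> U. Im (p$3) = F (p$1) (p$2) (Re (p$3))} \<and>
        (\<forall>A \<in> lie_g m1 m3 m4. \<forall>p \<in> M \<inter> U.
           \<exists>D. ((\<lambda>q. Im (q$3) - F (q$1) (q$2) (Re (q$3))) has_derivative D) (at p)
               \<and> D (affine_vf A p) = 0))"

definition model1 :: "(complex^3) set" where
  "model1 = {p. Im (p$3) = 2 * (Re (p$1))^2 + (cmod (p$2))^2}"

definition model2 :: "(complex^3) set" where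
  "model2 = {p. Re (p$2) \<noteq> 1 \<and> Im (p$3) = (Re (p$1))^2 / (1 - Re (p$2)) + 2 * (cmod (p$2))^2}"

definition affinely_equiv_to :: "(complex^3) set \<Rightarrow> (complex^3) set \<Rightarrow> bool" where
  "affinely_equiv_to M S \<longleftrightarrow>
     (\<exists>(A::complex^3^3) b V W. invertible A \<and> open V \<and> 0 \<in> V \<and> open W \<and>
        (\<lambda>p. A *v p + b) ` (M \<inter> V) = S \<inter> W)"

end

theory Submission imports Defs begin
lemma vector_4 [simp]:
 "(vector [x,y,z,w] ::('a::zero)^4)$1 = x"
 "(vector [x,y,z,w] ::('a::zero)^4)$2 = y"
 "(vector [x,y,z,w] ::('a::zero)^4)$3 = z"
 "(vector [x,y,z,w] ::('a::zero)^4)$4 = w"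
  unfolding vector_def by simp_all

lemma vec_nth_has_derivative [derivative_intros]:
  "((\<lambda>x::'a::real_normed_vector^'n. x $ i) has_derivative (\<lambda>y. y $ i)) F"
  by (rule bounded_linear_imp_has_derivative[OF bounded_linear_vec_nth])

lemma vf_E1: "affine_vf (E1 m1 m3 m4) p = vector [-2* of_real m1 * p$1 + (of_real m3 - \<i>* of_real m4)*p$2 + \<i>* (of_real m1)^2*p$3 + 1, 0, 4*\<i>*p$1 + 2* of_real m1*p$3]"
  unfolding affine_vf_def E1_def mat4_def hom_coords_def matrix_vector_mult_def
  by (simp add: sum_4)
lemma vf_E2: "affine_vf E2 p = vector [\<i>, 0, 0]"
  unfolding affine_vf_def E2_def mat4_def hom_coords_def matrix_vector_mult_def
  by (simp add: sum_4)
lemma vf_E3: "affine_vf (E3 m1 m3) p = vector [3/2* of_real m3 * p$1 - of_real m1 * p$2 + \<i>/4* of_real m1* of_real m3 * p$3, of_real m3 * p$2 + 1, 2*\<i>*p$2 + 2* of_real m3*p$3]"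
  unfolding affine_vf_def E3_def mat4_def hom_coords_def matrix_vector_mult_def
  by (simp add: sum_4)
lemma vf_E4: "affine_vf (E4 m1 m4) p = vector [3/2* of_real m4 * p$1 + \<i>* of_real m1 * p$2 + \<i>/4* of_real m1* of_real m4 * p$3, of_real m4 * p$2 + \<i>, 2*p$2 + 2* of_real m4*p$3]"
  unfolding affine_vf_def E4_def mat4_def hom_coords_def matrix_vector_mult_def
  by (simp add: sum_4)
lemma vf_E5: "affine_vf E5 p = vector [0, 0, 1]"
  unfolding affine_vf_def E5_def mat4_def hom_coords_def matrix_vector_mult_def
  by (simp add: sum_4)

lemma decomp3:
  fixes L :: "complex^3 \<Rightarrow> real"
  assumes "bounded_linear L"
  shows "L k = Re (k$1) * L (vector[1,0,0]) + Im (k$1) * L (vector[\<i>,0,0])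
             + Re (k$2) * L (vector[0,1,0]) + Im (k$2) * L (vector[0,\<i>,0])
             + Re (k$3) * L (vector[0,0,1]) + Im (k$3) * L (vector[0,0,\<i>])"
proof -
  interpret L: bounded_linear L by fact
  have "k = Re (k$1) *\<^sub>R vector[1,0,0] + Im (k$1) *\<^sub>R vector[\<i>,0,0]
             + Re (k$2) *\<^sub>R vector[0,1,0] + Im (k$2) *\<^sub>R vector[0,\<i>,0]
             + Re (k$3) *\<^sub>R vector[0,0,1] + Im (k$3) *\<^sub>R vector[0,0,\<i>]"
    unfolding vec_eq_iff forall_3 by (simp add: complex_eq_iff)
  then have "L k = L (Re (k$1) *\<^sub>R vector[1,0,0] + Im (k$1) *\<^sub>R vector[\<i>,0,0]
             + Re (k$2) *\<^sub>R vector[0,1,0] + Im (k$2) *\<^sub>R vector[0,\<i>,0]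
             + Re (k$3) *\<^sub>R vector[0,0,1] + Im (k$3) *\<^sub>R vector[0,0,\<i>])" by simp
  then show ?thesis by (simp add: L.add L.scaleR)
qed

lemma pointwise:
  fixes F :: "complex \<Rightarrow> complex \<Rightarrow> real \<Rightarrow> real" and p :: "complex^3"
  defines "G \<equiv> \<lambda>q::complex^3. F (q$1) (q$2) (Re (q$3))"
  assumes der: "((\<lambda>q. Im (q$3) - G q) has_derivative D) (at p)"
    and t1: "D (affine_vf (E1 m1 m3 m4) p) = 0"
    and t2: "D (affine_vf E2 p) = 0"
    and t3: "D (affine_vf (E3 m1 m3) p) = 0"
    and t4: "D (affine_vf (E4 m1 m4) p) = 0"
    and t5: "D (affine_vf E5 p) = 0"
  defines "D' \<equiv> \<lambda>k. Im (k$3) - D k"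
  shows "(G has_derivative D') (at p)"
    and "D' (vector[\<i>,0,0]) = 0" "D' (vector[0,0,1]) = 0" "D' (vector[0,0,\<i>]) = 0"
    and "(1 - 2*m1*Re(p$1) + m3*Re(p$2) + m4*Im(p$2) - m1^2*Im(p$3)) * D' (vector[1,0,0])
           = 4*Re(p$1) + 2*m1*Im(p$3)"
    and "(3/2*m3*Re(p$1) - m1*Re(p$2) - m1*m3*Im(p$3)/4) * D' (vector[1,0,0])
           + (1 + m3*Re(p$2)) * D' (vector[0,1,0]) + m3*Im(p$2) * D' (vector[0,\<i>,0])
           = 2*Re(p$2) + 2*m3*Im(p$3)"
    and "(3/2*m4*Re(p$1) - m1*Im(p$2) - m1*m4*Im(p$3)/4) * D' (vector[1,0,0])
           + m4*Re(p$2) * D' (vector[0,1,0]) + (1 + m4*Im(p$2)) * D' (vector[0,\<i>,0])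
           = 2*Im(p$2) + 2*m4*Im(p$3)"
proof -
  have bl: "bounded_linear D" using der by (rule has_derivative_bounded_linear)
  have imd: "((\<lambda>q::complex^3. Im (q$3)) has_derivative (\<lambda>k. Im (k$3))) (at p)"
    by (auto intro!: derivative_eq_intros bounded_linear.has_derivative[OF bounded_linear_vec_nth])
  have gd: "(G has_derivative D') (at p)"
  proof -
    have "((\<lambda>q. Im (q$3) - (Im (q$3) - G q)) has_derivative D') (at p)"
      unfolding D'_def by (rule has_derivative_diff[OF imd der])
    then show ?thesis by simp
  qed
  show "(G has_derivative D') (at p)" by (fact gd)
  have bl': "bounded_linear D'" using gd by (rule has_derivative_bounded_linear)
  have c1: "((\<lambda>t::real. G (p + t *\<^sub>R vector[0,0,\<i>])) has_derivative (\<lambda>t. D' (t *\<^sub>R vector[0,0,\<i>]))) (at 0)"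
  proof -
    have h1: "((\<lambda>t::real. p + t *\<^sub>R (vector[0,0,\<i>]::complex^3)) has_derivative (\<lambda>t. t *\<^sub>R vector[0,0,\<i>])) (at 0)"
      by (auto intro!: derivative_eq_intros)
    have h2: "(G has_derivative D') (at (p + (0::real) *\<^sub>R vector[0,0,\<i>]))" using gd by simp
    show ?thesis using has_derivative_compose[OF h1 h2] by (simp add: o_def)
  qed
  have "(\<lambda>t::real. G (p + t *\<^sub>R vector[0,0,\<i>])) = (\<lambda>t. G p)"
    by (simp add: G_def)
  then have c2: "((\<lambda>t::real. G (p + t *\<^sub>R vector[0,0,\<i>])) has_derivative (\<lambda>t. 0)) (at 0)"
    by simp
  have "(\<lambda>t. D' (t *\<^sub>R vector[0,0,\<i>])) = (\<lambda>t::real. 0::real)"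
    using has_derivative_unique[OF c1 c2] .
  then have d3i: "D' (vector[0,0,\<i>]) = 0" by (metis scaleR_one)
  show "D' (vector[0,0,\<i>]) = 0" by (fact d3i)
  have key: "\<And>A. D A = 0 \<Longrightarrow> D' A = Im (A$3)" unfolding D'_def by simp
  note dc = decomp3[OF bl', of "affine_vf _ p"]
  have d1i: "D' (vector[\<i>,0,0]) = 0"
    using key[OF t2] dc[of E2] by (simp add: vf_E2)
  show "D' (vector[\<i>,0,0]) = 0" by (fact d1i)
  have d3: "D' (vector[0,0,1]) = 0"
    using key[OF t5] dc[of E5] by (simp add: vf_E5)
  show "D' (vector[0,0,1]) = 0" by (fact d3)
  show "(1 - 2*m1*Re(p$1) + m3*Re(p$2) + m4*Im(p$2) - m1^2*Im(p$3)) * D' (vector[1,0,0])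
           = 4*Re(p$1) + 2*m1*Im(p$3)"
    using key[OF t1] dc[of "E1 m1 m3 m4"] d1i d3 d3i by (simp add: vf_E1 algebra_simps power2_eq_square)
  show "(3/2*m3*Re(p$1) - m1*Re(p$2) - m1*m3*Im(p$3)/4) * D' (vector[1,0,0])
           + (1 + m3*Re(p$2)) * D' (vector[0,1,0]) + m3*Im(p$2) * D' (vector[0,\<i>,0])
           = 2*Re(p$2) + 2*m3*Im(p$3)"
    using key[OF t3] dc[of "E3 m1 m3"] d1i d3 d3i by (simp add: vf_E3 algebra_simps)
  show "(3/2*m4*Re(p$1) - m1*Im(p$2) - m1*m4*Im(p$3)/4) * D' (vector[1,0,0])
           + m4*Re(p$2) * D' (vector[0,1,0]) + (1 + m4*Im(p$2)) * D' (vector[0,\<i>,0])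
           = 2*Im(p$2) + 2*m4*Im(p$3)"
    using key[OF t4] dc[of "E4 m1 m4"] d1i d3 d3i by (simp add: vf_E4 algebra_simps)
qed

lemma alg_core:
  fixes m1 m3 m4 x1 x2 y2 v A1 A2 B2 :: real
  defines "\<delta> \<equiv> 1 + m3 * x2 + m4 * y2"
  defines "sv \<equiv> x1 + m1 * v/2"
  defines "N \<equiv> x2^2 + y2^2"
  defines "a \<equiv> \<delta> - 2 * m1 * sv"
  defines "\<Phi> \<equiv> \<delta> * (v - N) - 2 * sv^2"
  assumes e1: "(1 - 2 * m1 * x1 + m3 * x2 + m4 * y2 - m1^2 * v) * A1 = 4 * x1 + 2 * m1 * v"
    and e3: "(3/2 * m3 * x1 - m1 * x2 - m1 * m3 * v/4) * A1 + (1 + m3 * x2) * A2 + m3 * y2 * B2 = 2 * x2 + 2 * m3 * v"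
    and e4: "(3/2 * m4 * x1 - m1 * y2 - m1 * m4 * v/4) * A1 + m4 * x2 * A2 + (1 + m4 * y2) * B2 = 2 * y2 + 2 * m4 * v"
    and dnz: "\<delta> \<noteq> 0"
  shows "-4 * sv + a * A1 = 0"
    and "\<delta> * (m3 * (v-N) - 2 * x2 * \<delta> + a * A2) - 3 * m3 * \<Phi> = 0"
    and "\<delta> * (m4 * (v-N) - 2 * y2 * \<delta> + a * B2) - 3 * m4 * \<Phi> = 0"
proof -
  have E1: "a * A1 = 4 * sv" using e1 unfolding a_def \<delta>_def sv_def by (simp add: algebra_simps power2_eq_square)
  then show "-4 * sv + a * A1 = 0" by simp
  define X where "X = \<delta> * (m3 * (v-N) - 2 * x2 * \<delta> + a * A2) - 3 * m3 * \<Phi>"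
  define Y where "Y = \<delta> * (m4 * (v-N) - 2 * y2 * \<delta> + a * B2) - 3 * m4 * \<Phi>"
  define c3 where "c3 = 3/2 * m3 * x1 - m1 * x2 - m1 * m3 * v/4"
  define c4 where "c4 = 3/2 * m4 * x1 - m1 * y2 - m1 * m4 * v/4"
  have p3: "(1+m3 * x2) * X + m3 * y2 * Y = \<delta> * c3 * (4 * sv) + \<delta> * a * ((1 + m3 * x2) * A2 + m3 * y2 * B2 - (2 * x2 + 2 * m3 * v))"
    unfolding X_def Y_def \<Phi>_def N_def \<delta>_def a_def sv_def c3_def
    by (simp add: field_simps power2_eq_square)
  have p4: "m4 * x2 * X + (1+m4 * y2) * Y = \<delta> * c4 * (4 * sv) + \<delta> * a * (m4 * x2 * A2 + (1 + m4 * y2) * B2 - (2 * y2 + 2 * m4 * v))"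
    unfolding X_def Y_def \<Phi>_def N_def \<delta>_def a_def sv_def c4_def
    by (simp add: field_simps power2_eq_square)
  have r3: "(1+m3 * x2) * X + m3 * y2 * Y = \<delta> * a * (c3 * A1 + (1 + m3 * x2) * A2 + m3 * y2 * B2 - (2 * x2 + 2 * m3 * v))"
    unfolding p3 E1[symmetric] by (simp add: algebra_simps)
  have r4: "m4 * x2 * X + (1+m4 * y2) * Y = \<delta> * a * (c4 * A1 + m4 * x2 * A2 + (1 + m4 * y2) * B2 - (2 * y2 + 2 * m4 * v))"
    unfolding p4 E1[symmetric] by (simp add: algebra_simps)
  have z3: "(1+m3 * x2) * X + m3 * y2 * Y = 0" using r3 e3 unfolding c3_def by simp
  have z4: "m4 * x2 * X + (1+m4 * y2) * Y = 0" using r4 e4 unfolding c4_def by simp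
  have "\<delta> * X = (1+m4 * y2) * ((1+m3 * x2) * X + m3 * y2 * Y) - m3 * y2 * (m4 * x2 * X + (1+m4 * y2) * Y)"
    unfolding \<delta>_def by algebra
  then have "\<delta> * X = 0" using z3 z4 by simp
  then show "\<delta> * (m3 * (v-N) - 2 * x2 * \<delta> + a * A2) - 3 * m3 * \<Phi> = 0" using dnz X_def by simp
  have "\<delta> * Y = (1+m3 * x2) * (m4 * x2 * X + (1+m4 * y2) * Y) - m4 * x2 * ((1+m3 * x2) * X + m3 * y2 * Y)"
    unfolding \<delta>_def by algebra
  then have "\<delta> * Y = 0" using z3 z4 by simp
  then show "\<delta> * (m4 * (v-N) - 2 * y2 * \<delta> + a * B2) - 3 * m4 * \<Phi> = 0" using dnz Y_def by simp
qed

definition dl :: "real \<Rightarrow> real \<Rightarrow> complex^3 \<Rightarrow> real" where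
  "dl m3 m4 y = 1 + m3 * Re (y$2) + m4 * Im (y$2)"
definition PhR :: "real \<Rightarrow> real \<Rightarrow> real \<Rightarrow> (complex^3 \<Rightarrow> real) \<Rightarrow> complex^3 \<Rightarrow> real" where
  "PhR m1 m3 m4 G y = dl m3 m4 y * (G y - (Re (y$2)^2 + Im (y$2)^2)) - 2 * (Re (y$1) + m1 * G y / 2)^2"

lemma Hderiv:
  fixes G :: "complex^3 \<Rightarrow> real" and q :: "complex^3"
  assumes dG: "(G has_derivative D') (at q)"
    and i1: "D' (vector[\<i>,0,0]) = 0" and r3: "D' (vector[0,0,1]) = 0" and i3: "D' (vector[0,0,\<i>]) = 0"
    and e1: "(1 - 2 * m1 * Re(q$1) + m3 * Re(q$2) + m4 * Im(q$2) - m1^2 * G q) * D' (vector[1,0,0])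
           = 4 * Re(q$1) + 2 * m1 * G q"
    and e3: "(3/2 * m3 * Re(q$1) - m1 * Re(q$2) - m1 * m3 * G q/4) * D' (vector[1,0,0])
           + (1 + m3 * Re(q$2)) * D' (vector[0,1,0]) + m3 * Im(q$2) * D' (vector[0,\<i>,0])
           = 2 * Re(q$2) + 2 * m3 * G q"
    and e4: "(3/2 * m4 * Re(q$1) - m1 * Im(q$2) - m1 * m4 * G q/4) * D' (vector[1,0,0])
           + m4 * Re(q$2) * D' (vector[0,1,0]) + (1 + m4 * Im(q$2)) * D' (vector[0,\<i>,0])
           = 2 * Im(q$2) + 2 * m4 * G q"
    and dnz: "dl m3 m4 q \<noteq> 0"
  shows "((\<lambda>y. PhR m1 m3 m4 G y / dl m3 m4 y ^ 3) has_derivative (\<lambda>h. 0)) (at q)"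
proof -
  have bl: "bounded_linear D'" using dG by (rule has_derivative_bounded_linear)
  have c1: "((\<lambda>y::complex^3. Re (y$1)) has_derivative (\<lambda>h. Re (h$1))) (at q)"
    by (auto intro!: derivative_eq_intros bounded_linear.has_derivative[OF bounded_linear_vec_nth])
  have c2: "((\<lambda>y::complex^3. Re (y$2)) has_derivative (\<lambda>h. Re (h$2))) (at q)"
    by (auto intro!: derivative_eq_intros bounded_linear.has_derivative[OF bounded_linear_vec_nth])
  have c3: "((\<lambda>y::complex^3. Im (y$2)) has_derivative (\<lambda>h. Im (h$2))) (at q)"
    by (auto intro!: derivative_eq_intros bounded_linear.has_derivative[OF bounded_linear_vec_nth])
  define dd where "dd = (\<lambda>h::complex^3. m3 * Re (h$2) + m4 * Im (h$2))"
  have ddd: "(dl m3 m4 has_derivative dd) (at q)"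
    unfolding dl_def[abs_def] dd_def
    by (auto intro!: derivative_eq_intros c2 c3)
  define x1 where "x1 = Re (q$1)"
  define x2 where "x2 = Re (q$2)"
  define y2 where "y2 = Im (q$2)"
  define v where "v = G q"
  define P' where "P' = (\<lambda>h. dd h * (v - (x2^2 + y2^2)) + dl m3 m4 q * (D' h - (2 * x2 * Re (h$2) + 2 * y2 * Im (h$2)))
         - 4 * (x1 + m1 * v / 2) * (Re (h$1) + m1 * D' h / 2))"
  have h1: "((\<lambda>y. G y - (Re (y$2)^2 + Im (y$2)^2)) has_derivative (\<lambda>h. D' h - (2 * x2 * Re (h $ 2) + 2 * y2 * Im (h $ 2)))) (at q)"
    by (auto intro!: derivative_eq_intros dG simp: x2_def y2_def)
  have h2: "((\<lambda>y. Re (y$1) + m1 * G y / 2) has_derivative (\<lambda>h. Re (h$1) + m1 * D' h / 2)) (at q)"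
    by (auto intro!: derivative_eq_intros dG)
  have h3: "((\<lambda>y. (Re (y$1) + m1 * G y / 2)^2) has_derivative (\<lambda>h. 2 * (x1 + m1 * v / 2) * (Re (h$1) + m1 * D' h / 2))) (at q)"
    using has_derivative_power[OF h2, of 2] by (rule has_derivative_eq_rhs) (simp add: fun_eq_iff x1_def v_def algebra_simps)
  have h4: "((\<lambda>y. dl m3 m4 y * (G y - (Re (y$2)^2 + Im (y$2)^2))) has_derivative
     (\<lambda>h. dl m3 m4 q * (D' h - (2 * x2 * Re (h $ 2) + 2 * y2 * Im (h $ 2))) + dd h * (v - (x2^2 + y2^2)))) (at q)"
    using has_derivative_mult[OF ddd h1] by (rule has_derivative_eq_rhs) (simp add: fun_eq_iff x2_def y2_def v_def algebra_simps)
  have dP: "(PhR m1 m3 m4 G has_derivative P') (at q)"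
    unfolding PhR_def[abs_def] P'_def
    using has_derivative_diff[OF h4 has_derivative_mult[OF has_derivative_const[of 2] h3]]
    by (rule has_derivative_eq_rhs) (simp add: fun_eq_iff algebra_simps)
  have key: "P' h * dl m3 m4 q = 3 * dd h * PhR m1 m3 m4 G q" for h
  proof -
    have dec: "D' h = Re (h$1) * D' (vector[1,0,0]) + Re (h$2) * D' (vector[0,1,0]) + Im (h$2) * D' (vector[0,\<i>,0])"
      using decomp3[OF bl, of h] i1 r3 i3 by simp
    note ac = alg_core[of m1 x1 m3 x2 m4 y2 v "D' (vector[1,0,0])" "D' (vector[0,1,0])" "D' (vector[0,\<i>,0])"]
    have dl': "dl m3 m4 q = 1 + m3 * x2 + m4 * y2" by (simp add: dl_def x2_def y2_def)
    have A: "-4 * (x1 + m1 * v/2) + (1 + m3 * x2 + m4 * y2 - 2 * m1 * (x1 + m1 * v/2)) * D' (vector[1,0,0]) = 0"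
     and B: "(1 + m3 * x2 + m4 * y2) * (m3 * (v - (x2^2+y2^2)) - 2 * x2 * (1 + m3 * x2 + m4 * y2) + (1 + m3 * x2 + m4 * y2 - 2 * m1 * (x1 + m1 * v/2)) * D' (vector[0,1,0])) - 3 * m3 * ((1 + m3 * x2 + m4 * y2) * (v - (x2^2+y2^2)) - 2 * (x1 + m1 * v/2)^2) = 0"
     and C: "(1 + m3 * x2 + m4 * y2) * (m4 * (v - (x2^2+y2^2)) - 2 * y2 * (1 + m3 * x2 + m4 * y2) + (1 + m3 * x2 + m4 * y2 - 2 * m1 * (x1 + m1 * v/2)) * D' (vector[0,\<i>,0])) - 3 * m4 * ((1 + m3 * x2 + m4 * y2) * (v - (x2^2+y2^2)) - 2 * (x1 + m1 * v/2)^2) = 0"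
      using ac e1 e3 e4 dnz unfolding x1_def x2_def y2_def v_def dl_def by auto
    have "P' h * dl m3 m4 q - 3 * dd h * PhR m1 m3 m4 G q
       = (1 + m3 * x2 + m4 * y2) * Re (h$1) * (-4 * (x1 + m1 * v/2) + (1 + m3 * x2 + m4 * y2 - 2 * m1 * (x1 + m1 * v/2)) * D' (vector[1,0,0]))
         + Re (h$2) * ((1 + m3 * x2 + m4 * y2) * (m3 * (v - (x2^2+y2^2)) - 2 * x2 * (1 + m3 * x2 + m4 * y2) + (1 + m3 * x2 + m4 * y2 - 2 * m1 * (x1 + m1 * v/2)) * D' (vector[0,1,0])) - 3 * m3 * ((1 + m3 * x2 + m4 * y2) * (v - (x2^2+y2^2)) - 2 * (x1 + m1 * v/2)^2))
         + Im (h$2) * ((1 + m3 * x2 + m4 * y2) * (m4 * (v - (x2^2+y2^2)) - 2 * y2 * (1 + m3 * x2 + m4 * y2) + (1 + m3 * x2 + m4 * y2 - 2 * m1 * (x1 + m1 * v/2)) * D' (vector[0,\<i>,0])) - 3 * m4 * ((1 + m3 * x2 + m4 * y2) * (v - (x2^2+y2^2)) - 2 * (x1 + m1 * v/2)^2))"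
      unfolding P'_def dd_def dl' PhR_def dec
      by (simp add: x1_def x2_def y2_def v_def dl_def algebra_simps power2_eq_square)
    then show ?thesis using A B C by simp
  qed
  have d3: "((\<lambda>y. dl m3 m4 y ^ 3) has_derivative (\<lambda>h. 3 * dl m3 m4 q ^ 2 * dd h)) (at q)"
    using has_derivative_power[OF ddd, of 3] by (rule has_derivative_eq_rhs) (simp add: fun_eq_iff)
  have "((\<lambda>y. PhR m1 m3 m4 G y / dl m3 m4 y ^ 3) has_derivative
        (\<lambda>h. - PhR m1 m3 m4 G q * (inverse (dl m3 m4 q ^ 3) * (3 * dl m3 m4 q ^ 2 * dd h) * inverse (dl m3 m4 q ^ 3)) + P' h / dl m3 m4 q ^ 3)) (at q)"
    using has_derivative_divide[OF dP d3] dnz by simp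
  moreover have "(\<lambda>h. - PhR m1 m3 m4 G q * (inverse (dl m3 m4 q ^ 3) * (3 * dl m3 m4 q ^ 2 * dd h) * inverse (dl m3 m4 q ^ 3)) + P' h / dl m3 m4 q ^ 3) = (\<lambda>h. 0)"
  proof
    fix h
    have "P' h = 3 * dd h * PhR m1 m3 m4 G q / dl m3 m4 q" using key[of h] dnz by (simp add: field_simps)
    then show "- PhR m1 m3 m4 G q * (inverse (dl m3 m4 q ^ 3) * (3 * dl m3 m4 q ^ 2 * dd h) * inverse (dl m3 m4 q ^ 3)) + P' h / dl m3 m4 q ^ 3 = 0"
      using dnz by (simp add: field_simps power2_eq_square power3_eq_cube)
  qed
  ultimately show ?thesis by simp
qed

lemma smallbound:
  fixes m1 m3 m4 x1 x2 y2 v w \<eta> :: real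
  assumes "\<bar>x1\<bar> \<le> \<eta>" "\<bar>x2\<bar> \<le> \<eta>" "\<bar>y2\<bar> \<le> \<eta>" "\<bar>v\<bar> \<le> \<eta>" "\<bar>w\<bar> \<le> \<eta>"
    and eb: "\<eta> * (8 * (1 + \<bar>m1\<bar> + \<bar>m3\<bar> + \<bar>m4\<bar>)^2) \<le> 1"
  shows "1 + m3 * x2 + m4 * y2 - 2 * m1 * x1 - m1^2 * (v + w) / 2 \<ge> 1/2"
    and "1 + m3 * x2 + m4 * y2 \<ge> 1/2"
proof -
  have e0: "0 \<le> \<eta>" using assms(1) by linarith
  have a1: "\<bar>m3 * x2\<bar> \<le> \<bar>m3\<bar> * \<eta>" unfolding abs_mult by (rule mult_left_mono) (use assms in auto)
  have a2: "\<bar>m4 * y2\<bar> \<le> \<bar>m4\<bar> * \<eta>" unfolding abs_mult by (rule mult_left_mono) (use assms in auto)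
  have a3: "\<bar>m1 * x1\<bar> \<le> \<bar>m1\<bar> * \<eta>" unfolding abs_mult by (rule mult_left_mono) (use assms in auto)
  have a4: "\<bar>m1^2 * (v + w)\<bar> \<le> m1^2 * (2*\<eta>)" unfolding abs_mult
    by (rule mult_mono) (use assms in auto)
  have K: "\<bar>m3\<bar> + \<bar>m4\<bar> + 2*\<bar>m1\<bar> + m1^2 \<le> (1 + \<bar>m1\<bar> + \<bar>m3\<bar> + \<bar>m4\<bar>)^2"
    by (simp add: power2_eq_square algebra_simps)
  have "(\<bar>m3\<bar> + \<bar>m4\<bar> + 2*\<bar>m1\<bar> + m1^2) * \<eta> \<le> (1 + \<bar>m1\<bar> + \<bar>m3\<bar> + \<bar>m4\<bar>)^2 * \<eta>"
    by (rule mult_right_mono[OF K e0])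
  then have S: "\<bar>m3\<bar> * \<eta> + \<bar>m4\<bar> * \<eta> + 2 * (\<bar>m1\<bar> * \<eta>) + m1^2 * \<eta> \<le> 1/8"
    using eb by (simp add: algebra_simps)
  have b4: "m1^2 * (v + w) / 2 \<le> m1^2 * \<eta>" using a4 by (simp add: abs_le_iff)
  have b1: "m3 * x2 \<ge> - (\<bar>m3\<bar> * \<eta>)" "m4 * y2 \<ge> - (\<bar>m4\<bar> * \<eta>)" "m1 * x1 \<le> \<bar>m1\<bar> * \<eta>"
    using a1 a2 a3 by (simp_all add: abs_le_iff)
  have mp: "0 \<le> m1^2 * \<eta>" "0 \<le> \<bar>m1\<bar> * \<eta>" using e0 by simp_all
  show "1 + m3 * x2 + m4 * y2 - 2 * m1 * x1 - m1^2 * (v + w) / 2 \<ge> 1/2"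
    using S b4 b1 by linarith
  show "1 + m3 * x2 + m4 * y2 \<ge> 1/2"
    using S b1 mp by linarith
qed

definition PhiM :: "real \<Rightarrow> real \<Rightarrow> real \<Rightarrow> complex^3 \<Rightarrow> real" where
  "PhiM m1 m3 m4 p = dl m3 m4 p * (Im (p$3) - (Re (p$2)^2 + Im (p$2)^2)) - 2 * (Re (p$1) + m1 * Im (p$3) / 2)^2"

lemma pt:
  fixes F :: "complex \<Rightarrow> complex \<Rightarrow> real \<Rightarrow> real" and p :: "complex^3"
  assumes tang: "\<And>A. A \<in> {E1 m1 m3 m4, E2, E3 m1 m3, E4 m1 m4, E5} \<Longrightarrow>
      \<exists>D. ((\<lambda>q. Im (q$3) - F (q$1) (q$2) (Re (q$3))) has_derivative D) (at p) \<and> D (affine_vf A p) = 0"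
  shows "\<exists>D'. ((\<lambda>q. F (q$1) (q$2) (Re (q$3))) has_derivative D') (at p)
    \<and> D' (vector[\<i>,0,0]) = 0 \<and> D' (vector[0,0,1]) = 0 \<and> D' (vector[0,0,\<i>]) = 0
    \<and> (1 - 2*m1*Re(p$1) + m3*Re(p$2) + m4*Im(p$2) - m1^2*Im(p$3)) * D' (vector[1,0,0])
           = 4*Re(p$1) + 2*m1*Im(p$3)
    \<and> (3/2*m3*Re(p$1) - m1*Re(p$2) - m1*m3*Im(p$3)/4) * D' (vector[1,0,0])
           + (1 + m3*Re(p$2)) * D' (vector[0,1,0]) + m3*Im(p$2) * D' (vector[0,\<i>,0])
           = 2*Re(p$2) + 2*m3*Im(p$3)
    \<and> (3/2*m4*Re(p$1) - m1*Im(p$2) - m1*m4*Im(p$3)/4) * D' (vector[1,0,0])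
           + m4*Re(p$2) * D' (vector[0,1,0]) + (1 + m4*Im(p$2)) * D' (vector[0,\<i>,0])
           = 2*Im(p$2) + 2*m4*Im(p$3)"
proof -
  define \<psi> where "\<psi> = (\<lambda>q::complex^3. Im (q$3) - F (q$1) (q$2) (Re (q$3)))"
  obtain D1 where d1: "(\<psi> has_derivative D1) (at p)" "D1 (affine_vf (E1 m1 m3 m4) p) = 0"
    using tang[of "E1 m1 m3 m4"] unfolding \<psi>_def by auto
  obtain D2 where d2: "(\<psi> has_derivative D2) (at p)" "D2 (affine_vf E2 p) = 0"
    using tang[of "E2"] unfolding \<psi>_def by auto
  obtain D3 where d3: "(\<psi> has_derivative D3) (at p)" "D3 (affine_vf (E3 m1 m3) p) = 0"
    using tang[of "E3 m1 m3"] unfolding \<psi>_def by auto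
  obtain D4 where d4: "(\<psi> has_derivative D4) (at p)" "D4 (affine_vf (E4 m1 m4) p) = 0"
    using tang[of "E4 m1 m4"] unfolding \<psi>_def by auto
  obtain D5 where d5: "(\<psi> has_derivative D5) (at p)" "D5 (affine_vf E5 p) = 0"
    using tang[of "E5"] unfolding \<psi>_def by auto
  have "D2 = D1" "D3 = D1" "D4 = D1" "D5 = D1"
    using has_derivative_unique d1(1) d2(1) d3(1) d4(1) d5(1) by blast+
  then have all: "D1 (affine_vf E2 p) = 0" "D1 (affine_vf (E3 m1 m3) p) = 0"
     "D1 (affine_vf (E4 m1 m4) p) = 0" "D1 (affine_vf E5 p) = 0"
    using d2(2) d3(2) d4(2) d5(2) by auto
  note P = pointwise[of F D1 p m1 m3 m4, OF d1(1)[unfolded \<psi>_def] d1(2) all]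
  show ?thesis
    apply (rule exI[of _ "\<lambda>k. Im (k$3) - D1 k"])
    using P by simp
qed

lemma comp_small:
  fixes q :: "complex^3"
  assumes "norm q < \<rho>"
  shows "\<bar>Re (q$i)\<bar> < \<rho>" "\<bar>Im (q$i)\<bar> < \<rho>"
  using Finite_Cartesian_Product.norm_nth_le[where x=q and i=i] abs_Re_le_cmod[of "q$i"] abs_Im_le_cmod[of "q$i"] assms by auto

lemma norm3_le:
  fixes x :: "complex^3"
  shows "norm x \<le> norm (x$1) + norm (x$2) + norm (x$3)"
proof -
  have "norm x \<le> sum (\<lambda>i. norm (x$i)) UNIV"
    unfolding norm_vec_def by (rule L2_set_le_sum) simp
  then show ?thesis by (simp add: sum_3)
qed

lemma core:
  fixes F :: "complex \<Rightarrow> complex \<Rightarrow> real \<Rightarrow> real" and M U :: "(complex^3) set"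
  assumes Uo: "open U" and U0: "0 \<in> U" and F0: "F 0 0 0 = 0"
    and MU: "M \<inter> U = {p\<in>U. Im (p$3) = F (p$1) (p$2) (Re (p$3))}"
    and tang: "\<And>A p. A \<in> {E1 m1 m3 m4, E2, E3 m1 m3, E4 m1 m4, E5} \<Longrightarrow> p \<in> M \<inter> U \<Longrightarrow>
      \<exists>D. ((\<lambda>q. Im (q$3) - F (q$1) (q$2) (Re (q$3))) has_derivative D) (at p) \<and> D (affine_vf A p) = 0"
  shows "\<exists>V. open V \<and> 0 \<in> V \<and> M \<inter> V = {p\<in>V. PhiM m1 m3 m4 p = 0} \<and> (\<forall>p\<in>V. dl m3 m4 p \<ge> 1/2)"
proof -
  define G where "G = (\<lambda>q::complex^3. F (q$1) (q$2) (Re (q$3)))"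
  define \<psi> where "\<psi> = (\<lambda>q::complex^3. Im (q$3) - G q)"
  have inM: "p \<in> M \<inter> U" if "p \<in> U" "Im (p$3) = G p" for p
    using MU that unfolding G_def by blast
  have G0: "G 0 = 0" by (simp add: G_def F0)
  have M0: "0 \<in> M \<inter> U" using inM[OF U0] G0 by simp
  obtain D0 where "(\<psi> has_derivative D0) (at 0)"
    using tang[of E5 0, OF _ M0] unfolding \<psi>_def G_def by auto
  then have cont: "continuous (at 0) \<psi>" by (rule has_derivative_continuous)
  have psi0: "\<psi> 0 = 0" using G0 by (simp add: \<psi>_def)
  obtain \<epsilon>0 where e0: "\<epsilon>0 > 0" "ball 0 \<epsilon>0 \<subseteq> U" using Uo U0 open_contains_ball_eq by blast
  define K where "K = 1 + \<bar>m1\<bar> + \<bar>m3\<bar> + \<bar>m4\<bar>"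
  have K1: "K \<ge> 1" unfolding K_def by simp
  define \<eta> where "\<eta> = min (\<epsilon>0/4) (1/(8*K^2))"
  have eta_pos: "\<eta> > 0" using e0 K1 unfolding \<eta>_def by simp
  have eta_e: "\<eta> \<le> \<epsilon>0/4" unfolding \<eta>_def by simp
  have eta_K: "\<eta> * (8 * (1 + \<bar>m1\<bar> + \<bar>m3\<bar> + \<bar>m4\<bar>)^2) \<le> 1"
  proof -
    have "\<eta> \<le> 1/(8*K^2)" unfolding \<eta>_def by simp
    then have "\<eta> * (8*K^2) \<le> 1/(8*K^2) * (8*K^2)" by (rule mult_right_mono) simp
    also have "\<dots> = 1" using K1 by simp
    finally show ?thesis unfolding K_def .
  qed
  obtain \<rho>0 where r0: "\<rho>0 > 0" "\<And>x'. dist x' 0 < \<rho>0 \<Longrightarrow> dist (\<psi> x') (\<psi> 0) < \<eta>/2"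
    using cont[unfolded continuous_at_eps_delta] eta_pos by (metis half_gt_zero)
  define \<rho> where "\<rho> = min \<rho>0 (\<eta>/2)"
  have rho_pos: "\<rho> > 0" using r0 eta_pos unfolding \<rho>_def by simp
  have rho_eta: "\<rho> \<le> \<eta>" using eta_pos unfolding \<rho>_def by simp
  have Gsmall: "\<bar>G q\<bar> < \<eta>" if "norm q < \<rho>" for q
  proof -
    have "\<bar>\<psi> q\<bar> < \<eta>/2" using r0(2)[of q] that psi0 unfolding \<rho>_def by (simp add: dist_norm)
    moreover have "\<bar>Im (q$3)\<bar> < \<eta>/2" using comp_small(2)[of q \<rho> 3] that unfolding \<rho>_def by simp
    ultimately show ?thesis unfolding \<psi>_def by linarith
  qed
  define lift where "lift = (\<lambda>q::complex^3. vector [q$1, q$2, Complex (Re (q$3)) (G q)] :: complex^3)"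
  have lift_simps: "lift q $ 1 = q$1" "lift q $ 2 = q$2" "lift q $ 3 = Complex (Re (q$3)) (G q)" for q
    unfolding lift_def by simp_all
  have G_lift: "G (lift q) = G q" for q by (simp add: G_def lift_simps)
  have liftM: "lift q \<in> M \<inter> U" if "norm q < \<rho>" for q
  proof -
    have "norm (lift q) \<le> norm (q$1) + norm (q$2) + norm (Complex (Re (q$3)) (G q))"
      using norm3_le[of "lift q"] by (simp add: lift_simps)
    also have "\<dots> \<le> norm q + norm q + (\<bar>Re (q$3)\<bar> + \<bar>G q\<bar>)"
      using Finite_Cartesian_Product.norm_nth_le[where x=q and i=1] Finite_Cartesian_Product.norm_nth_le[where x=q and i=2] cmod_le[of "Complex (Re (q$3)) (G q)"] by simp
    also have "\<dots> < \<epsilon>0"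
      using that comp_small(1)[OF that, of 3] Gsmall[OF that] eta_e unfolding \<rho>_def by linarith
    finally have "lift q \<in> U" using e0(2) by auto
    then show ?thesis using inM[of "lift q"] by (simp add: lift_simps G_lift)
  qed
  define H where "H = (\<lambda>y. PhR m1 m3 m4 G y / dl m3 m4 y ^ 3)"
  have dl_big: "dl m3 m4 q \<ge> 1/2" if "norm q < \<rho>" for q
  proof -
    have "\<bar>Re (q$2)\<bar> \<le> \<eta>" "\<bar>Im (q$2)\<bar> \<le> \<eta>" using comp_small[OF that, of 2] rho_eta by linarith+
    then show ?thesis unfolding dl_def using smallbound(2)[of 0 \<eta> "Re (q$2)" "Im (q$2)" 0 0, OF _ _ _ _ _ eta_K] eta_pos by simp
  qed
  have Hd: "(H has_derivative (\<lambda>h. 0)) (at q)" if qr: "norm q < \<rho>" for q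
  proof -
    define p where "p = lift q"
    obtain D' where D': "(G has_derivative D') (at p)"
      "D' (vector[\<i>,0,0]) = 0" "D' (vector[0,0,1]) = 0" "D' (vector[0,0,\<i>]) = 0"
      "(1 - 2*m1*Re(p$1) + m3*Re(p$2) + m4*Im(p$2) - m1^2*Im(p$3)) * D' (vector[1,0,0])
           = 4*Re(p$1) + 2*m1*Im(p$3)"
      "(3/2*m3*Re(p$1) - m1*Re(p$2) - m1*m3*Im(p$3)/4) * D' (vector[1,0,0])
           + (1 + m3*Re(p$2)) * D' (vector[0,1,0]) + m3*Im(p$2) * D' (vector[0,\<i>,0])
           = 2*Re(p$2) + 2*m3*Im(p$3)"
      "(3/2*m4*Re(p$1) - m1*Im(p$2) - m1*m4*Im(p$3)/4) * D' (vector[1,0,0])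
           + m4*Re(p$2) * D' (vector[0,1,0]) + (1 + m4*Im(p$2)) * D' (vector[0,\<i>,0])
           = 2*Im(p$2) + 2*m4*Im(p$3)"
      using pt[where F=F and p=p] tang liftM[OF qr] unfolding p_def G_def by blast
    have Gq: "(G has_derivative D') (at q)"
    proof -
      have tr: "((\<lambda>y. y + (p - q)) has_derivative (\<lambda>h. h)) (at q)"
        by (auto intro!: derivative_eq_intros)
      have "(G has_derivative D') (at (q + (p - q)))" using D'(1) by simp
      from has_derivative_compose[OF tr this]
      have "((\<lambda>y. G (y + (p - q))) has_derivative D') (at q)" by (simp add: o_def)
      moreover have "(\<lambda>y. G (y + (p - q))) = G"
        by (rule ext) (simp add: G_def p_def lift_simps)
      ultimately show ?thesis by simp
    qed
    have pp: "Re (p$1) = Re (q$1)" "Re (p$2) = Re (q$2)" "Im (p$2) = Im (q$2)" "Im (p$3) = G q"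
      unfolding p_def lift_simps by simp_all
    show ?thesis unfolding H_def
      apply (rule Hderiv[OF Gq D'(2,3,4)])
      using D'(5,6,7) dl_big[OF qr] unfolding pp by auto
  qed
  have Hconst: "H q = H 0" if "q \<in> ball 0 \<rho>" for q
    apply (rule has_derivative_zero_unique[of "ball 0 \<rho>" H])
    using Hd rho_pos that by (auto intro: has_derivative_at_withinI)
  have H0: "H 0 = 0" unfolding H_def PhR_def dl_def using G0 by simp
  have PhR0: "PhR m1 m3 m4 G q = 0" if "norm q < \<rho>" for q
  proof -
    have "H q = 0" using Hconst[of q] H0 that by simp
    then show ?thesis unfolding H_def using dl_big[OF that] by simp
  qed
  define V where "V = U \<inter> ball 0 \<rho> \<inter> {p. \<bar>Im (p$3)\<bar> < \<eta>}"
  have "open {p::complex^3. \<bar>Im (p$3)\<bar> < \<eta>}"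
    by (rule open_Collect_less) (auto intro!: continuous_intros)
  then have Vo: "open V" unfolding V_def using Uo by auto
  have V0: "0 \<in> V" unfolding V_def using U0 rho_pos eta_pos by simp
  have Vdl: "\<forall>p\<in>V. dl m3 m4 p \<ge> 1/2" unfolding V_def using dl_big by auto
  have MV: "M \<inter> V = {p\<in>V. PhiM m1 m3 m4 p = 0}"
  proof (intro set_eqI iffI)
    fix p assume pM: "p \<in> M \<inter> V"
    then have pU: "p \<in> M \<inter> U" "norm p < \<rho>" unfolding V_def by auto
    then have "Im (p$3) = G p" using MU unfolding G_def by blast
    then have "PhiM m1 m3 m4 p = PhR m1 m3 m4 G p" unfolding PhiM_def PhR_def by simp
    then show "p \<in> {p\<in>V. PhiM m1 m3 m4 p = 0}" using PhR0[OF pU(2)] pM by simp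
  next
    fix p assume "p \<in> {p\<in>V. PhiM m1 m3 m4 p = 0}"
    then have pV: "p \<in> V" and ph: "PhiM m1 m3 m4 p = 0" by auto
    then have pU: "p \<in> U" and pr: "norm p < \<rho>" and pv: "\<bar>Im (p$3)\<bar> < \<eta>" unfolding V_def by auto
    have ph2: "PhR m1 m3 m4 G p = 0" using PhR0[OF pr] .
    have b: "\<bar>Re (p$1)\<bar> \<le> \<eta>" "\<bar>Re (p$2)\<bar> \<le> \<eta>" "\<bar>Im (p$2)\<bar> \<le> \<eta>"
      using comp_small[OF pr] rho_eta by (meson less_imp_le order.strict_trans2)+
    define x1 where "x1 = Re (p$1)"
    define x2 where "x2 = Re (p$2)"
    define y2 where "y2 = Im (p$2)"
    define v where "v = Im (p$3)"
    define w where "w = G p"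
    have sb: "1 + m3 * x2 + m4 * y2 - 2 * m1 * x1 - m1^2 * (v + w) / 2 \<ge> 1/2"
      using smallbound(1)[OF b[folded x1_def x2_def y2_def], of v w, OF _ _ eta_K] pv Gsmall[OF pr]
      unfolding v_def w_def by simp
    have e1: "(1 + m3 * x2 + m4 * y2) * (v - (x2^2 + y2^2)) - 2 * (x1 + m1 * v / 2)^2 = 0"
      using ph unfolding PhiM_def dl_def x1_def x2_def y2_def v_def .
    have e2: "(1 + m3 * x2 + m4 * y2) * (w - (x2^2 + y2^2)) - 2 * (x1 + m1 * w / 2)^2 = 0"
      using ph2 unfolding PhR_def dl_def x1_def x2_def y2_def w_def .
    have "(v - w) * (1 + m3 * x2 + m4 * y2 - 2 * m1 * x1 - m1^2 * (v + w) / 2) = 0"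
      using e1 e2 by (simp add: algebra_simps power2_eq_square) (simp add: field_simps)
    then have "v = w" using sb by simp
    then have "p \<in> M \<inter> U" using inM[OF pU] unfolding v_def w_def by simp
    then show "p \<in> M \<inter> V" using pV by simp
  qed
  show ?thesis using Vo V0 MV Vdl by blast
qed

lemma transfer:
  fixes A B :: "complex^3^3" and M S V :: "(complex^3) set"
  assumes AB: "A ** B = mat 1" and BA: "B ** A = mat 1" and Vo: "open V" and V0: "0 \<in> V"
    and MV: "M \<inter> V = {p\<in>V. P p}" and eq: "\<And>p. p \<in> V \<Longrightarrow> (A *v p \<in> S \<longleftrightarrow> P p)"
  shows "affinely_equiv_to M S"
  unfolding affinely_equiv_to_def
proof (intro exI conjI)
  show "invertible A" unfolding invertible_def using AB BA by blast
  show "open V" "0 \<in> V" by fact+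
  show "open ((\<lambda>y. B *v y) -` V)"
    by (rule open_vimage[OF Vo]) (intro continuous_intros)
  have BAp: "B *v (A *v p) = p" for p by (simp add: matrix_vector_mul_assoc BA)
  have ABp: "A *v (B *v p) = p" for p by (simp add: matrix_vector_mul_assoc AB)
  show "(\<lambda>p. A *v p + 0) ` (M \<inter> V) = S \<inter> (\<lambda>y. B *v y) -` V"
  proof (intro set_eqI iffI)
    fix y assume "y \<in> (\<lambda>p. A *v p + 0) ` (M \<inter> V)"
    then obtain p where p: "p \<in> M \<inter> V" "y = A *v p" by auto
    then have "P p" using MV by blast
    then show "y \<in> S \<inter> (\<lambda>y. B *v y) -` V" using p eq[of p] BAp by auto
  next
    fix y assume y: "y \<in> S \<inter> (\<lambda>y. B *v y) -` V"
    define p where "p = B *v y"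
    have pV: "p \<in> V" using y p_def by auto
    have "A *v p = y" using ABp p_def by simp
    then have "P p" using eq[OF pV] y by simp
    then have "p \<in> M \<inter> V" using MV pV by blast
    then show "y \<in> (\<lambda>p. A *v p + 0) ` (M \<inter> V)" using \<open>A *v p = y\<close> by force
  qed
qed

definition mat3 :: "complex list list \<Rightarrow> complex^3^3" where
  "mat3 rs = vector (map vector rs)"

lemma mat3_nth:
  "mat3 [[a,b,c],[d,e,f],[g,h,k]] $ 1 $ 1 = a" "mat3 [[a,b,c],[d,e,f],[g,h,k]] $ 1 $ 2 = b"
  "mat3 [[a,b,c],[d,e,f],[g,h,k]] $ 1 $ 3 = c" "mat3 [[a,b,c],[d,e,f],[g,h,k]] $ 2 $ 1 = d"
  "mat3 [[a,b,c],[d,e,f],[g,h,k]] $ 2 $ 2 = e" "mat3 [[a,b,c],[d,e,f],[g,h,k]] $ 2 $ 3 = f"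
  "mat3 [[a,b,c],[d,e,f],[g,h,k]] $ 3 $ 1 = g" "mat3 [[a,b,c],[d,e,f],[g,h,k]] $ 3 $ 2 = h"
  "mat3 [[a,b,c],[d,e,f],[g,h,k]] $ 3 $ 3 = k"
  unfolding mat3_def by simp_all

lemma mat3_mult: "mat3 [[a,b,c],[d,e,f],[g,h,k]] *v p =
   vector [a * p$1 + b * p$2 + c * p$3, d * p$1 + e * p$2 + f * p$3, g * p$1 + h * p$2 + k * p$3]"
  unfolding vec_eq_iff forall_3 matrix_vector_mult_def by (simp add: sum_3 mat3_nth)

lemma mat3_mm: "mat3 [[a,b,c],[d,e,f],[g,h,k]] ** mat3 [[a',b',c'],[d',e',f'],[g',h',k']] =
   mat3 [[a*a'+b*d'+c*g', a*b'+b*e'+c*h', a*c'+b*f'+c*k'],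
         [d*a'+e*d'+f*g', d*b'+e*e'+f*h', d*c'+e*f'+f*k'],
         [g*a'+h*d'+k*g', g*b'+h*e'+k*h', g*c'+h*f'+k*k']]"
  unfolding vec_eq_iff forall_3 matrix_matrix_mult_def by (simp add: sum_3 mat3_nth)

lemma mat3_id: "mat3 [[1,0,0],[0,1,0],[0,0,1]] = mat 1"
  unfolding vec_eq_iff forall_3 by (simp add: mat3_nth mat_def)

lemma test1: "mat3 [[1,0,-\<i>* of_real m1/2],[0,1,0],[0,0,1]] ** mat3 [[1,0,\<i>* of_real m1/2],[0,1,0],[0,0,1]] = mat 1"
  unfolding mat3_mm mat3_id[symmetric] by simp


lemma F0_lemma:
  assumes "normal_form_fn F r"
  shows "F 0 0 0 = 0"
proof -
  have r: "r > 0" using assms unfolding normal_form_fn_def by simp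
  obtain c where c: "(\<forall>\<alpha>. wdeg \<alpha> \<le> 2 \<longrightarrow> c \<alpha> = 0) \<and>
        (\<forall>z1 z2 u. \<bar>Re z1\<bar> < r \<and> \<bar>Im z1\<bar> < r \<and> \<bar>Re z2\<bar> < r \<and> \<bar>Im z2\<bar> < r \<and> \<bar>u\<bar> < r \<longrightarrow>
           ((\<lambda>\<alpha>. c \<alpha> * monomial5 \<alpha> z1 z2 u) has_sum (F z1 z2 u - Q_norm z1 z2)) UNIV)"
    using assms unfolding normal_form_fn_def by (elim conjE exE) (rule that, rule conjI, assumption+)
  have h: "((\<lambda>\<alpha>. c \<alpha> * monomial5 \<alpha> 0 0 0) has_sum (F 0 0 0 - Q_norm 0 0)) UNIV"
  proof -
    have "\<bar>Re (0::complex)\<bar> < r \<and> \<bar>Im (0::complex)\<bar> < r \<and> \<bar>Re (0::complex)\<bar> < r \<and> \<bar>Im (0::complex)\<bar> < r \<and> \<bar>0::real\<bar> < r"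
      using r by simp
    then show ?thesis using conjunct2[OF c] by blast
  qed
  have z: "(\<lambda>\<alpha>. c \<alpha> * monomial5 \<alpha> 0 0 0) = (\<lambda>\<alpha>. 0)"
  proof
    fix \<alpha> :: "nat \<times> nat \<times> nat \<times> nat \<times> nat"
    obtain a b cc d e where al: "\<alpha> = (a,b,cc,d,e)" by (cases \<alpha>) auto
    show "c \<alpha> * monomial5 \<alpha> 0 0 0 = 0"
    proof (cases "a = 0 \<and> b = 0 \<and> cc = 0 \<and> d = 0 \<and> e = 0")
      case True then show ?thesis using c al by (simp add: wdeg_def)
    next
      case False then show ?thesis unfolding al monomial5_def by (auto simp: zero_power)
    qed
  qed
  have "F 0 0 0 - Q_norm 0 0 = 0"
    using has_sum_unique[OF h[unfolded z] has_sum_0] by simp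
  then show ?thesis by (simp add: Q_norm_def)
qed
theorem theorem4p6:
  fixes m1 m3 m4 :: real and M :: "(complex^3) set"
  assumes "integral_variety m1 m3 m4 M"
  shows "affinely_equiv_to M model1 \<or> affinely_equiv_to M model2"
proof -
  obtain F r U where nf: "normal_form_fn F r" and Uo: "open U" and U0: "0 \<in> U"
    and MU: "M \<inter> U = {p \<in> U. Im (p$3) = F (p$1) (p$2) (Re (p$3))}"
    and tg: "\<forall>A \<in> lie_g m1 m3 m4. \<forall>p \<in> M \<inter> U.
           \<exists>D. ((\<lambda>q. Im (q$3) - F (q$1) (q$2) (Re (q$3))) has_derivative D) (at p)
               \<and> D (affine_vf A p) = 0"
    using assms unfolding integral_variety_def by blast
  have sub: "{E1 m1 m3 m4, E2, E3 m1 m3, E4 m1 m4, E5} \<subseteq> lie_g m1 m3 m4"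
    unfolding lie_g_def by (rule span_superset)
  obtain V where Vo: "open V" and V0: "0 \<in> V" and MV: "M \<inter> V = {p\<in>V. PhiM m1 m3 m4 p = 0}"
    and Vdl: "\<forall>p\<in>V. dl m3 m4 p \<ge> 1/2"
    using core[OF Uo U0 F0_lemma[OF nf] MU, of m1 m3 m4] tg sub by blast
  show ?thesis
  proof (cases "m3 = 0 \<and> m4 = 0")
    case True
    define A where "A = mat3 [[1,0,-\<i> * of_real m1/2],[0,1,0],[0,0,1]]"
    define B where "B = mat3 [[1,0,\<i> * of_real m1/2],[0,1,0],[0,0,1]]"
    have "affinely_equiv_to M model1"
    proof (rule transfer[OF _ _ Vo V0 MV])
      show "A ** B = mat 1" "B ** A = mat 1"
        unfolding A_def B_def mat3_mm mat3_id[symmetric] by simp_all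
      fix p assume "p \<in> V"
      show "A *v p \<in> model1 \<longleftrightarrow> PhiM m1 m3 m4 p = 0"
      proof -
        have r1: "Re ((A *v p)$1) = Re (p$1) + m1 * Im (p$3) / 2" by (simp add: A_def mat3_mult)
        have r2: "(A *v p)$2 = p$2" by (simp add: A_def mat3_mult)
        have r3: "(A *v p)$3 = p$3" by (simp add: A_def mat3_mult)
        show ?thesis unfolding model1_def PhiM_def dl_def mem_Collect_eq r1 r2 r3 cmod_power2 using True
          by auto
      qed
    qed
    then show ?thesis ..
  next
    case False
    define c where "c = sqrt (m3^2 + m4^2)"
    have c2: "c^2 = m3^2 + m4^2" unfolding c_def by simp
    have "m3^2 + m4^2 > 0" using False by (simp add: sum_power2_gt_zero_iff)
    then have cpos: "c > 0" unfolding c_def by simp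
    have mnz: "Complex m3 (-m4) \<noteq> 0" using False by (simp add: complex_eq_iff)
    define A where "A = mat3 [[2 * of_real c, 0, -\<i> * of_real (m1 * c)],[0,- Complex m3 (-m4),0],[0,0,2 * of_real (c^2)]]"
    define B where "B = mat3 [[1/(2 * of_real c), 0, \<i> * of_real (m1/(4*c^2))],[0,- 1/Complex m3 (-m4),0],[0,0,1/(2 * of_real (c^2))]]"
    have "affinely_equiv_to M model2"
    proof (rule transfer[OF _ _ Vo V0 MV])
      have cnz: "complex_of_real c \<noteq> 0" using cpos by simp
      show "A ** B = mat 1" "B ** A = mat 1"
        unfolding A_def B_def mat3_mm mat3_id[symmetric] using cnz mnz
        by (simp_all add: field_simps power2_eq_square)
      fix p assume pV: "p \<in> V"
      have d: "dl m3 m4 p \<ge> 1/2" using Vdl pV by blast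
      define x1 where "x1 = Re (p$1)"
      define x2 where "x2 = Re (p$2)"
      define y2 where "y2 = Im (p$2)"
      define v where "v = Im (p$3)"
      have r1: "Re ((A *v p)$1) = 2 * c * (x1 + m1 * v / 2)"
        by (simp add: A_def mat3_mult x1_def v_def algebra_simps)
      have r2: "Re ((A *v p)$2) = -(m3 * x2 + m4 * y2)"
        by (simp add: A_def mat3_mult x2_def y2_def)
      have r2': "Im ((A *v p)$2) = -(m3 * y2 - m4 * x2)"
        by (simp add: A_def mat3_mult x2_def y2_def)
      have r3: "Im ((A *v p)$3) = 2 * c^2 * v"
        by (simp add: A_def mat3_mult v_def)
      have cm: "(cmod ((A *v p)$2))^2 = c^2 * (x2^2 + y2^2)"
        unfolding cmod_power2 r2 r2' c2 by (simp add: power2_eq_square algebra_simps)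
      have dlp: "dl m3 m4 p = 1 + m3 * x2 + m4 * y2" by (simp add: dl_def x2_def y2_def)
      have dpos: "1 + m3 * x2 + m4 * y2 > 0" using d dlp by simp
      have Ph: "PhiM m1 m3 m4 p = (1 + m3 * x2 + m4 * y2) * (v - (x2^2 + y2^2)) - 2 * (x1 + m1 * v / 2)^2"
        by (simp add: PhiM_def dlp x1_def x2_def y2_def v_def)
      have "A *v p \<in> model2 \<longleftrightarrow> 2 * c^2 * v = (2 * c * (x1 + m1 * v / 2))^2 / (1 + m3 * x2 + m4 * y2) + 2 * (c^2 * (x2^2 + y2^2))"
        unfolding model2_def mem_Collect_eq r1 r2 r3 cm using dpos by (auto simp: algebra_simps)
      also have "\<dots> \<longleftrightarrow> 2 * c^2 * (((1 + m3 * x2 + m4 * y2) * (v - (x2^2 + y2^2)) - 2 * (x1 + m1 * v / 2)^2) / (1 + m3 * x2 + m4 * y2)) = 0"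
        using dpos by (simp add: field_simps power2_eq_square)
      also have "\<dots> \<longleftrightarrow> PhiM m1 m3 m4 p = 0"
        unfolding Ph using dpos cpos by simp
      finally show "A *v p \<in> model2 \<longleftrightarrow> PhiM m1 m3 m4 p = 0" .
    qed
    then show ?thesis ..
  qed
qed
end
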